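(* For any space $X$ and $x\in X$, the following are equivalent: (1) $X$ is sequentially $0$-connected at $x$; (2) $X$ is path connected and $0$-tame at $x$; (3) $X$ is path connected and $\pi_0$-residual at $x$; (4) every sequence of (unbased) maps $\{f_{k}\}_{k\in\mathbb{N}}$, $f_k:S^0\to X$, that converges to $x$ is sequentially null-homotopic; (5) for every convergent sequence $x_k\to x$ in $X$, there exists a path $\alpha:I\to X$ such that $\alpha(1/k)=x_k$ for all $k$ and $\alpha(0)=x$.
   Context: All spaces Hausdorff; $I=[0,1]$, $S^0=\{-1,1\}$. $\mathbb{H}_0=\{0\}\cup\{1/m:m\in\mathbb{N}\}$ with basepoint $b_0=0$, and $\ell_m:S^0\to\mathbb{H}_0$ sends $-1\mapsto 0$, $1\mapsto 1/m$ (inclusion of the $m$-th copy of $S^0$ in the shrinking wedge). $[(\mathbb{H}_0,b_0),(X,x)]$ is the set of based homotopy classes; $\Theta_0:[(\mathbb{H}_0,b_0),(X,x)]\to\pi_0(X,x)^{\mathbb{N}}$, $[f]\mapsto([f\circ\ell_m])_m$. $X$ is sequentially $0$-connected at $x$ if $[(\mathbb{H}_0,b_0),(X,x)]$ is a singleton; $\pi_0$-residual at $x$ if $\Theta_0$ is injective; $\pi_0$-finitary at $x$ if every element of the image of $\Theta_0$ has all but finitely many coordinates equal to the path component of $x$; $0$-tame at $x$ if it is $\pi_0$-residual and $\pi_0$-finitary at $x$. A sequence of maps $\{f_k\}$ converges to $x$ if for every neighborhood $U$ of $x$, $\operatorname{Im}(f_k)\subseteq U$ for all but finitely many $k$; it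 is sequentially null-homotopic if there are free homotopies $H_k$ from $f_k$ to the constant map at $x$ such that $\{H_k\}$ converges to $x$. *)

theory Defs
  imports "HOL-Analysis.Analysis"
begin

definition H0_set :: "real set" where
  "H0_set = insert 0 {1 / real m | m. m \<ge> 1}"

definition H0 :: "real topology" where
  "H0 = subtopology euclideanreal H0_set"

definition S0 :: "real topology" where
  "S0 = subtopology euclideanreal {-1, 1}"

definition ell :: "nat \<Rightarrow> real \<Rightarrow> real" where
  "ell m t = (if t = -1 then 0 else 1 / real m)"

definition based_H0_map :: "'a topology \<Rightarrow> 'a \<Rightarrow> (real \<Rightarrow> 'a) \<Rightarrow> bool" where
  "based_H0_map X x f \<longleftrightarrow> continuous_map H0 X f \<and> f 0 = x"

definition based_H0_homotopic :: "'a topology \<Rightarrow> 'a \<Rightarrow> (real \<Rightarrow> 'a) \<Rightarrow> (real \<Rightarrow> 'a) \<Rightarrow> bool" where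
  "based_H0_homotopic X x f g \<longleftrightarrow> homotopic_with (\<lambda>h. h 0 = x) H0 X f g"

text \<open>Based homotopy of based maps (S^0,-1) \<rightarrow> (X,x); classes form \<pi>_0(X,x).\<close>
definition based_S0_homotopic :: "'a topology \<Rightarrow> 'a \<Rightarrow> (real \<Rightarrow> 'a) \<Rightarrow> (real \<Rightarrow> 'a) \<Rightarrow> bool" where
  "based_S0_homotopic X x f g \<longleftrightarrow> homotopic_with (\<lambda>h. h (-1) = x) S0 X f g"

text \<open>[(H_0,b_0),(X,x)] is a singleton (it always contains the constant map).\<close>
definition seq_0_connected_at :: "'a topology \<Rightarrow> 'a \<Rightarrow> bool" where
  "seq_0_connected_at X x \<longleftrightarrow>
     (\<forall>f g. based_H0_map X x f \<and> based_H0_map X x g \<longrightarrow> based_H0_homotopic X x f g)"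

text \<open>\<Theta>_0 injective: equal coordinates [f \<circ> l_m] = [g \<circ> l_m] for all m \<in> \<nat> imply [f] = [g].\<close>
definition pi0_residual_at :: "'a topology \<Rightarrow> 'a \<Rightarrow> bool" where
  "pi0_residual_at X x \<longleftrightarrow>
     (\<forall>f g. based_H0_map X x f \<and> based_H0_map X x g \<and>
        (\<forall>m\<ge>1. based_S0_homotopic X x (f \<circ> ell m) (g \<circ> ell m))
        \<longrightarrow> based_H0_homotopic X x f g)"

text \<open>Every element of the image of \<Theta>_0 has all but finitely many coordinates equal
  to the path component of x, i.e. the class of the constant map.\<close>
definition pi0_finitary_at :: "'a topology \<Rightarrow> 'a \<Rightarrow> bool" where
  "pi0_finitary_at X x \<longleftrightarrow>
     (\<forall>f. based_H0_map X x f \<longrightarrow>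
        finite {m. m \<ge> 1 \<and> \<not> based_S0_homotopic X x (f \<circ> ell m) (\<lambda>_. x)})"

definition tame0_at :: "'a topology \<Rightarrow> 'a \<Rightarrow> bool" where
  "tame0_at X x \<longleftrightarrow> pi0_residual_at X x \<and> pi0_finitary_at X x"

definition maps_converge_to :: "'b topology \<Rightarrow> 'a topology \<Rightarrow> (nat \<Rightarrow> 'b \<Rightarrow> 'a) \<Rightarrow> 'a \<Rightarrow> bool" where
  "maps_converge_to D X f x \<longleftrightarrow>
     (\<forall>U. openin X U \<and> x \<in> U \<longrightarrow> eventually (\<lambda>k. f k ` topspace D \<subseteq> U) sequentially)"

definition seq_null_homotopic :: "'b topology \<Rightarrow> 'a topology \<Rightarrow> (nat \<Rightarrow> 'b \<Rightarrow> 'a) \<Rightarrow> 'a \<Rightarrow> bool" where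
  "seq_null_homotopic D X f x \<longleftrightarrow>
     (\<exists>H :: nat \<Rightarrow> real \<times> 'b \<Rightarrow> 'a.
        (\<forall>k. continuous_map (prod_topology (top_of_set {0..1}) D) X (H k) \<and>
             (\<forall>t \<in> topspace D. H k (0, t) = f k t \<and> H k (1, t) = x)) \<and>
        maps_converge_to (prod_topology (top_of_set {0..1}) D) X H x)"

end

theory Submission
  imports Defs
begin


lemma cont_iff:
  fixes S :: "real set"
  shows "continuous_map (top_of_set S) X f \<longleftrightarrow>
    (\<forall>t\<in>S. f t \<in> topspace X) \<and>
    (\<forall>U. openin X U \<longrightarrow> (\<forall>t\<in>S. f t \<in> U \<longrightarrow> (\<exists>e>0. \<forall>s\<in>S. dist s t < e \<longrightarrow> f s \<in> U)))"
  unfolding continuous_map_def openin_euclidean_subtopology_iff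
  by (auto simp: Pi_iff)

lemma S0_discrete: "S0 = discrete_topology {-1, 1}"
  unfolding S0_def
  by (rule finite_t1_space_imp_discrete_topology) (auto intro!: Hausdorff_imp_t1_space Hausdorff_space_subtopology)

lemma S0_cont: "(\<And>s. s \<in> {-1,1} \<Longrightarrow> f s \<in> topspace X) \<Longrightarrow> continuous_map S0 X f"
  by (auto simp: S0_discrete)

lemma topspace_S0 [simp]: "topspace S0 = {-1,1}" by (simp add: S0_def)
lemma topspace_H0 [simp]: "topspace H0 = H0_set" by (simp add: H0_def)

lemma H0_set_01: "H0_set \<subseteq> {0..1}"
  by (auto simp: H0_set_def)

lemma inv_in_H0: "k \<ge> 1 \<Longrightarrow> 1 / real k \<in> H0_set"
  by (auto simp: H0_set_def)

lemma ell_cont: "m \<ge> 1 \<Longrightarrow> continuous_map S0 H0 (ell m)"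
  by (rule S0_cont) (auto simp: ell_def H0_set_def)



lemma inv_sep:
  fixes n m :: nat
  assumes "n \<ge> 1" "m \<ge> 1" "n \<noteq> m"
  shows "1 / (real m * (real m + 1)) \<le> \<bar>1 / real n - 1 / real m\<bar>"
proof (cases "n > m")
  case True
  then have "real n \<ge> real m + 1" by simp
  then have "1 / real n \<le> 1 / (real m + 1)" using assms by (simp add: frac_le)
  moreover have "1 / real m - 1 / (real m + 1) = 1 / (real m * (real m + 1))"
    using assms by (simp add: field_simps)
  ultimately show ?thesis by linarith
next
  case False
  then have "real n + 1 \<le> real m" using assms by simp
  have "1 / real n - 1 / real m = (real m - real n) / (real n * real m)"
    using assms by (simp add: field_simps)
  also have "\<dots> \<ge> 1 / (real n * real m)"
    using assms \<open>real n + 1 \<le> real m\<close> by (simp add: divide_right_mono)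
  finally have a: "1 / real n - 1 / real m \<ge> 1 / (real n * real m)" .
  have "real n * real m \<le> real m * (real m + 1)"
    using assms \<open>real n + 1 \<le> real m\<close> by (simp add: mult_mono)
  then have "1 / (real m * (real m + 1)) \<le> 1 / (real n * real m)"
    using assms by (simp add: frac_le)
  with a show ?thesis by linarith
qed

lemma H0_seq:
  assumes "continuous_map H0 X g"
  shows "limitin X (\<lambda>k. g (1 / real k)) (g 0) sequentially"
proof -
  have c: "continuous_map (top_of_set H0_set) X g" using assms by (simp add: H0_def)
  have z: "0 \<in> H0_set" by (simp add: H0_set_def)
  have c1: "\<forall>t\<in>H0_set. g t \<in> topspace X" and
    c2: "\<And>U. openin X U \<Longrightarrow> (\<forall>t\<in>H0_set. g t \<in> U \<longrightarrow> (\<exists>e>0. \<forall>s\<in>H0_set. dist s t < e \<longrightarrow> g s \<in> U))"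
    using c[unfolded cont_iff] by auto
  show ?thesis unfolding limitin_def
  proof (intro conjI allI impI)
    show "g 0 \<in> topspace X" using c1 z by blast
    fix U assume U: "openin X U \<and> g 0 \<in> U"
    then obtain e where e: "e > 0" "\<And>s. s \<in> H0_set \<Longrightarrow> dist s 0 < e \<Longrightarrow> g s \<in> U"
      using c2[of U] U z by blast
    obtain N :: nat where N: "inverse (real (Suc N)) < e" using e(1) reals_Archimedean by blast
    show "\<forall>\<^sub>F k in sequentially. g (1 / real k) \<in> U"
      unfolding eventually_sequentially
    proof (intro exI allI impI)
      fix k assume k: "Suc N \<le> k"
      have "1 / real k \<le> inverse (real (Suc N))" using k
        by (metis inverse_eq_divide le_imp_inverse_le of_nat_0_less_iff of_nat_le_iff zero_less_Suc)
      then have "dist (1 / real k) 0 < e" using N k by simp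
      moreover have "1 / real k \<in> H0_set" using k by (intro inv_in_H0) simp
      ultimately show "g (1 / real k) \<in> U" using e by blast
    qed
  qed
qed



lemma H0_cont:
  assumes g: "\<And>s. s \<in> H0_set \<Longrightarrow> g s \<in> topspace X"
    and lim: "limitin X (\<lambda>k. g (1 / real k)) (g 0) sequentially"
  shows "continuous_map H0 X g"
  unfolding H0_def cont_iff
proof (intro conjI ballI allI impI)
  fix t assume "t \<in> H0_set" then show "g t \<in> topspace X" by (rule g)
next
  fix U t assume U: "openin X U" and t: "t \<in> H0_set" and gt: "g t \<in> U"
  show "\<exists>e>0. \<forall>s\<in>H0_set. dist s t < e \<longrightarrow> g s \<in> U"
  proof (cases "t = 0")
    case True
    then obtain N where N: "\<And>k. k \<ge> N \<Longrightarrow> g (1 / real k) \<in> U"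
      using lim U gt unfolding limitin_def eventually_sequentially by blast
    show ?thesis
    proof (intro exI conjI ballI impI)
      show "(0::real) < 1 / (real N + 1)" by simp
      fix s assume s: "s \<in> H0_set" "dist s t < 1 / (real N + 1)"
      show "g s \<in> U"
      proof (cases "s = 0")
        case True then show ?thesis using gt \<open>t = 0\<close> by simp
      next
        case False
        then obtain m where m: "m \<ge> 1" "s = 1 / real m" using s(1) by (auto simp: H0_set_def)
        have "1 / real m < 1 / (real N + 1)" using s(2) m \<open>t = 0\<close> by simp
        have "real N + 1 < real m"
        proof (rule ccontr)
          assume "\<not> real N + 1 < real m"
          then have "real m \<le> real N + 1" by simp
          then have "1 / (real N + 1) \<le> 1 / real m" using m(1) by (intro frac_le) auto
          then show False using \<open>1 / real m < 1 / (real N + 1)\<close> by simp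
        qed
        then show ?thesis using N[of m] m by simp
      qed
    qed
  next
    case False
    then obtain m where m: "m \<ge> 1" "t = 1 / real m" using t by (auto simp: H0_set_def)
    show ?thesis
    proof (intro exI conjI ballI impI)
      show "0 < 1 / (real m * (real m + 1))" using m by simp
      fix s assume s: "s \<in> H0_set" "dist s t < 1 / (real m * (real m + 1))"
      have "s = t"
      proof (rule ccontr)
        assume st: "s \<noteq> t"
        show False
        proof (cases "s = 0")
          case True
          have "1 / (real m * (real m + 1)) \<le> 1 / real m" using m
            by (simp add: frac_le)
          then show False using s(2) True m by (simp add: dist_real_def)
        next
          case False
          then obtain n where n: "n \<ge> 1" "s = 1 / real n" using s(1) by (auto simp: H0_set_def)
          have "n \<noteq> m" using st n m by auto
          then show False using inv_sep[of n m] n m s(2) by (simp add: dist_real_def)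
        qed
      qed
      then show "g s \<in> U" using gt by simp
    qed
  qed
qed



lemma paste_seq:
  fixes \<gamma> :: "nat \<Rightarrow> real \<Rightarrow> 'a"
  assumes \<gamma>: "\<And>n. n \<ge> 1 \<Longrightarrow> pathin X (\<gamma> n)"
    and link: "\<And>n. n \<ge> 1 \<Longrightarrow> \<gamma> n 1 = \<gamma> (Suc n) 0"
  shows "continuous_map (top_of_set {1..}) X (\<lambda>s. \<gamma> (nat \<lfloor>s\<rfloor>) (s - of_int \<lfloor>s\<rfloor>))"
proof -
  define \<beta> where "\<beta> s = \<gamma> (nat \<lfloor>s\<rfloor>) (s - of_int \<lfloor>s\<rfloor>)" for s
  have K: "\<beta> s = \<gamma> m (s - real m)" if m: "m \<ge> 1" and s: "s \<in> {real m..real m + 1}" for m s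
  proof (cases "s < real m + 1")
    case True
    then have "\<lfloor>s\<rfloor> = int m" using s by (simp add: floor_eq_iff)
    then show ?thesis by (simp add: \<beta>_def)
  next
    case False
    then have "s = real m + 1" using s by simp
    then have "\<lfloor>s\<rfloor> = int m + 1" by simp
    then have "\<beta> s = \<gamma> (Suc m) 0" using \<open>s = real m + 1\<close> by (simp add: \<beta>_def nat_add_distrib)
    then show ?thesis using link[OF m] \<open>s = real m + 1\<close> by simp
  qed
  have piece: "continuous_map (top_of_set {real m..real m + 1}) X \<beta>" if m: "m \<ge> 1" for m
  proof (rule continuous_map_eq)
    have "continuous_map (top_of_set {real m..real m + 1}) (top_of_set {0..1}) (\<lambda>s. s - real m)"
      by (auto intro!: continuous_intros)
    then show "continuous_map (top_of_set {real m..real m + 1}) X (\<gamma> m \<circ> (\<lambda>s. s - real m))"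
      using \<gamma>[OF m] unfolding pathin_def by (rule continuous_map_compose)
    show "\<And>s. s \<in> topspace (top_of_set {real m..real m + 1}) \<Longrightarrow> (\<gamma> m \<circ> (\<lambda>s. s - real m)) s = \<beta> s"
      using K[OF m] by simp
  qed
  have pc: "\<exists>e>0. \<forall>s\<in>{real m..real m + 1}. dist s t < e \<longrightarrow> \<beta> s \<in> U"
    if "m \<ge> 1" "openin X U" "t \<in> {real m..real m + 1}" "\<beta> t \<in> U" for m U t
    using piece[OF that(1), unfolded cont_iff] that by blast
  have "continuous_map (top_of_set {1..}) X \<beta>"
    unfolding cont_iff
  proof (intro conjI ballI allI impI)
    fix t :: real assume t: "t \<in> {1..}"
    define n where "n = nat \<lfloor>t\<rfloor>"
    have n1: "n \<ge> 1" using t by (simp add: n_def le_nat_iff)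
    have nt: "real n \<le> t" "t < real n + 1" using t n1 by (simp_all add: n_def)
    show "\<beta> t \<in> topspace X"
      using piece[OF n1] nt unfolding cont_iff by auto
  next
    fix U and t :: real assume U: "openin X U" and t: "t \<in> {1..}" and bt: "\<beta> t \<in> U"
    define n where "n = nat \<lfloor>t\<rfloor>"
    have n1: "n \<ge> 1" using t by (simp add: n_def le_nat_iff)
    have nt: "real n \<le> t" "t < real n + 1" using t n1 by (simp_all add: n_def)
    obtain e1 where e1: "e1 > 0" "\<And>s. s\<in>{real n..real n + 1} \<Longrightarrow> dist s t < e1 \<Longrightarrow> \<beta> s \<in> U"
      using pc[OF n1 U _ bt] nt by auto
    show "\<exists>e>0. \<forall>s\<in>{1..}. dist s t < e \<longrightarrow> \<beta> s \<in> U"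
    proof (cases "real n < t")
      case True
      show ?thesis
      proof (intro exI conjI ballI impI)
        show "0 < min e1 (min (t - real n) (real n + 1 - t))" using e1 True nt by simp
        fix s :: real assume s: "s \<in> {1..}" "dist s t < min e1 (min (t - real n) (real n + 1 - t))"
        then show "\<beta> s \<in> U" using e1 by (intro e1(2)) (auto simp: dist_real_def)
      qed
    next
      case False
      then have tn: "t = real n" using nt by simp
      show ?thesis
      proof (cases "n = 1")
        case True
        show ?thesis
        proof (intro exI conjI ballI impI)
          show "0 < min e1 1" using e1 by simp
          fix s :: real assume s: "s \<in> {1..}" "dist s t < min e1 1"
          then show "\<beta> s \<in> U" using tn True by (intro e1(2)) (auto simp: dist_real_def)
        qed
      next
        case False
        then have n2: "n - 1 \<ge> 1" using n1 by simp
        have rn: "real (n - 1) = real n - 1" using n1 by simp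
        obtain e2 where e2: "e2 > 0" "\<And>s. s\<in>{real (n-1)..real (n-1) + 1} \<Longrightarrow> dist s t < e2 \<Longrightarrow> \<beta> s \<in> U"
          using pc[OF n2 U _ bt] tn rn by auto
        show ?thesis
        proof (intro exI conjI ballI impI)
          show "0 < min e1 (min e2 1)" using e1 e2 by simp
          fix s :: real assume s: "s \<in> {1..}" "dist s t < min e1 (min e2 1)"
          show "\<beta> s \<in> U"
          proof (cases "s \<ge> real n")
            case True
            then show ?thesis using s tn by (intro e1(2)) (auto simp: dist_real_def)
          next
            case False
            then show ?thesis using s tn rn by (intro e2(2)) (auto simp: dist_real_def)
          qed
        qed
      qed
    qed
  qed
  moreover have "\<beta> = (\<lambda>s. \<gamma> (nat \<lfloor>s\<rfloor>) (s - of_int \<lfloor>s\<rfloor>))" by (simp add: \<beta>_def fun_eq_iff)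
  ultimately show ?thesis by simp
qed



lemma conc_path:
  fixes \<gamma> :: "nat \<Rightarrow> real \<Rightarrow> 'a"
  assumes \<gamma>: "\<And>n. n \<ge> 1 \<Longrightarrow> pathin X (\<gamma> n)"
    and link: "\<And>n. n \<ge> 1 \<Longrightarrow> \<gamma> n 1 = \<gamma> (Suc n) 0"
    and x: "x \<in> topspace X"
    and conv: "\<And>U. openin X U \<Longrightarrow> x \<in> U \<Longrightarrow> \<exists>N. \<forall>n\<ge>N. \<forall>u\<in>{0..1}. \<gamma> n u \<in> U"
  shows "\<exists>\<alpha>. pathin X \<alpha> \<and> \<alpha> 0 = x \<and> (\<forall>m\<ge>1. \<alpha> (1 / real m) = \<gamma> m 0)"
proof -
  define \<beta> where "\<beta> s = \<gamma> (nat \<lfloor>s\<rfloor>) (s - of_int \<lfloor>s\<rfloor>)" for s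
  have cb: "continuous_map (top_of_set {1..}) X \<beta>"
    using paste_seq[of X \<gamma>, OF \<gamma> link] by (simp add: \<beta>_def[abs_def])
  have inv: "continuous_map (top_of_set {0<..1}) (top_of_set {1..}) (\<lambda>t::real. 1 / t)"
    by (auto intro!: continuous_intros simp: Pi_iff)
  have cb2: "continuous_map (top_of_set {0<..1}) X (\<lambda>t. \<beta> (1 / t))"
    using continuous_map_compose[OF inv cb] by (simp add: o_def)
  have cb2a: "\<forall>t\<in>{0<..1}. \<beta> (1/t) \<in> topspace X"
    and cb2b: "\<And>U. openin X U \<Longrightarrow> \<forall>t\<in>{0<..1}. \<beta> (1/t) \<in> U \<longrightarrow> (\<exists>e>0. \<forall>s\<in>{0<..1}. dist s t < e \<longrightarrow> \<beta> (1/s) \<in> U)"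
    using cb2[unfolded cont_iff] by auto
  define \<alpha> where "\<alpha> t = (if t = 0 then x else \<beta> (1 / t))" for t :: real
  have "pathin X \<alpha>"
    unfolding pathin_def cont_iff
  proof (intro conjI ballI allI impI)
    fix t :: real assume "t \<in> {0..1}"
    then show "\<alpha> t \<in> topspace X" using cb2a x by (auto simp: \<alpha>_def)
  next
    fix U and t :: real assume U: "openin X U" and t: "t \<in> {0..1}" and at: "\<alpha> t \<in> U"
    show "\<exists>e>0. \<forall>s\<in>{0..1}. dist s t < e \<longrightarrow> \<alpha> s \<in> U"
    proof (cases "t = 0")
      case False
      then have t': "t \<in> {0<..1}" using t by auto
      then obtain e1 where e1: "e1 > 0" "\<And>s. s\<in>{0<..1} \<Longrightarrow> dist s t < e1 \<Longrightarrow> \<beta> (1/s) \<in> U"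
        using cb2b[OF U] at False by (auto simp: \<alpha>_def)
      show ?thesis
      proof (intro exI conjI ballI impI)
        show "0 < min e1 t" using e1 t' by simp
        fix s :: real assume s: "s \<in> {0..1}" "dist s t < min e1 t"
        then have "s \<in> {0<..1}" by (auto simp: dist_real_def)
        then show "\<alpha> s \<in> U" using e1 s by (auto simp: \<alpha>_def)
      qed
    next
      case True
      then have xU: "x \<in> U" using at by (simp add: \<alpha>_def)
      obtain N where N: "\<And>n u. n \<ge> N \<Longrightarrow> u \<in> {0..1} \<Longrightarrow> \<gamma> n u \<in> U"
        using conv[OF U xU] by blast
      show ?thesis
      proof (intro exI conjI ballI impI)
        show "0 < 1 / (real N + 1)" by simp
        fix s :: real assume s: "s \<in> {0..1}" "dist s t < 1 / (real N + 1)"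
        show "\<alpha> s \<in> U"
        proof (cases "s = 0")
          case True then show ?thesis using xU by (simp add: \<alpha>_def)
        next
          case False
          then have sp: "s > 0" "s < 1 / (real N + 1)" using s True by (auto simp: dist_real_def)
          then have "real N + 1 < 1 / s" by (simp add: field_simps)
          then have "N \<le> nat \<lfloor>1/s\<rfloor>" by linarith
          moreover have "1/s - of_int \<lfloor>1/s\<rfloor> \<in> {0..1}" by (simp add: frac_def[symmetric] frac_lt_1 less_imp_le)
          ultimately show ?thesis using N False by (simp add: \<alpha>_def \<beta>_def)
        qed
      qed
    qed
  qed
  moreover have "\<alpha> 0 = x" by (simp add: \<alpha>_def)
  moreover have "\<forall>m\<ge>1. \<alpha> (1 / real m) = \<gamma> m 0" by (simp add: \<alpha>_def \<beta>_def)
  ultimately show ?thesis by blast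
qed



lemma core:
  fixes p :: "nat \<Rightarrow> real \<Rightarrow> 'a"
  assumes p: "\<And>k. k \<ge> 1 \<Longrightarrow> pathin X (p k)"
    and p0: "\<And>k. k \<ge> 1 \<Longrightarrow> p k 0 = xs k"
    and p1: "\<And>k. k \<ge> 1 \<Longrightarrow> p k 1 = x"
    and x: "x \<in> topspace X"
    and conv: "\<And>U. openin X U \<Longrightarrow> x \<in> U \<Longrightarrow> \<exists>N. \<forall>k\<ge>N. \<forall>u\<in>{0..1}. p k u \<in> U"
  shows "\<exists>\<alpha>. pathin X \<alpha> \<and> \<alpha> 0 = x \<and> (\<forall>k\<ge>1. \<alpha> (1 / real k) = xs k)"
proof -
  define \<gamma> where "\<gamma> n u = (if u \<le> 1/2 then p n (2 * u) else p (Suc n) (2 - 2 * u))" for n u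
  have sub1: "subtopology (top_of_set {0..1}) {u \<in> topspace (top_of_set {0..1}). u \<le> 1/2} = top_of_set {0..(1/2::real)}"
    apply (simp add: subtopology_subtopology)
    apply (rule arg_cong[where f="top_of_set"])
    apply auto
    done
  have sub2: "subtopology (top_of_set {0..1}) {u \<in> topspace (top_of_set {0..1}). 1/2 \<le> u} = top_of_set {(1/2::real)..1}"
    apply (simp add: subtopology_subtopology)
    apply (rule arg_cong[where f="top_of_set"])
    apply auto
    done
  have c1: "continuous_map (top_of_set {0..1/2}) (top_of_set {0..1}) (\<lambda>u::real. 2 * u)"
    by (auto intro!: continuous_intros simp: Pi_iff)
  have c2: "continuous_map (top_of_set {1/2..1}) (top_of_set {0..1}) (\<lambda>u::real. 2 - 2 * u)"
    by (auto intro!: continuous_intros simp: Pi_iff)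
  have g: "pathin X (\<gamma> n)" if n: "n \<ge> 1" for n
    unfolding pathin_def \<gamma>_def
  proof (rule continuous_map_cases_le)
    show "continuous_map (top_of_set {0..1}) euclideanreal (\<lambda>u. u)" by simp
    show "continuous_map (top_of_set {0..1}) euclideanreal (\<lambda>u. 1/2)" by simp
    show "continuous_map (subtopology (top_of_set {0..1}) {u \<in> topspace (top_of_set {0..1}). u \<le> 1/2}) X (\<lambda>u. p n (2 * u))"
      unfolding sub1 using continuous_map_compose[OF c1 p[OF n, unfolded pathin_def]]
      by (simp add: o_def)
    show "continuous_map (subtopology (top_of_set {0..1}) {u \<in> topspace (top_of_set {0..1}). 1/2 \<le> u}) X (\<lambda>u. p (Suc n) (2 - 2 * u))"
      unfolding sub2 using continuous_map_compose[OF c2 p[of "Suc n", unfolded pathin_def]] n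
      by (simp add: o_def)
    show "p n (2 * u) = p (Suc n) (2 - 2 * u)" if "u \<in> topspace (top_of_set {0..1})" "u = 1/2" for u
    proof -
      have "2 * u = 1" "2 - 2 * u = 1" using that(2) by simp_all
      then show ?thesis using p1[OF n] p1[of "Suc n"] by simp
    qed
  qed
  have link: "\<gamma> n 1 = \<gamma> (Suc n) 0" if "n \<ge> 1" for n
    using p0[of "Suc n"] by (simp add: \<gamma>_def)
  have cv: "\<exists>N. \<forall>n\<ge>N. \<forall>u\<in>{0..1}. \<gamma> n u \<in> U" if U: "openin X U" "x \<in> U" for U
  proof -
    obtain N where N: "\<And>k u. k \<ge> N \<Longrightarrow> u \<in> {0..1} \<Longrightarrow> p k u \<in> U" using conv[OF U] by blast
    show ?thesis
      by (rule exI[of _ N]) (auto simp: \<gamma>_def intro!: N)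
  qed
  obtain \<alpha> where "pathin X \<alpha>" "\<alpha> 0 = x" "\<forall>m\<ge>1. \<alpha> (1 / real m) = \<gamma> m 0"
    using conc_path[where \<gamma>=\<gamma> and X=X and x=x, OF g link x cv] by blast
  then show ?thesis using p0 by (auto simp: \<gamma>_def)
qed



definition condE :: "'a topology \<Rightarrow> 'a \<Rightarrow> bool" where
  "condE X x \<longleftrightarrow> (\<forall>xs :: nat \<Rightarrow> 'a. (\<forall>k\<ge>1. xs k \<in> topspace X) \<and> limitin X xs x sequentially
            \<longrightarrow> (\<exists>\<alpha>. pathin X \<alpha> \<and> \<alpha> 0 = x \<and> (\<forall>k\<ge>1. \<alpha> (1 / real k) = xs k)))"

lemma small_inv: "(e::real) > 0 \<Longrightarrow> \<exists>N\<ge>1. \<forall>k\<ge>N. 1 / real k < e"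
proof -
  assume e: "e > 0"
  obtain N :: nat where N: "inverse (real (Suc N)) < e" using e reals_Archimedean by blast
  show ?thesis
  proof (intro exI conjI allI impI)
    show "Suc N \<ge> 1" by simp
    fix k assume k: "Suc N \<le> k"
    have "1 / real k \<le> inverse (real (Suc N))" using k
      by (metis inverse_eq_divide le_imp_inverse_le of_nat_0_less_iff of_nat_le_iff zero_less_Suc)
    then show "1 / real k < e" using N by simp
  qed
qed

lemma path_small:
  assumes "pathin X \<alpha>" "openin X U" "\<alpha> 0 \<in> U"
  shows "\<exists>e>0. \<forall>t\<in>{0..1}. t < e \<longrightarrow> \<alpha> t \<in> U"
proof -
  have "\<forall>U. openin X U \<longrightarrow> (\<forall>t\<in>{0..1}. \<alpha> t \<in> U \<longrightarrow> (\<exists>e>0. \<forall>s\<in>{0..1}. dist s t < e \<longrightarrow> \<alpha> s \<in> U))"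
    using assms(1) unfolding pathin_def cont_iff by blast
  then have "\<exists>e>0. \<forall>s\<in>{0..1}. dist s 0 < e \<longrightarrow> \<alpha> s \<in> U"
    using assms(2,3) by force
  then obtain e where "e > 0" "\<forall>s\<in>{0..1}. dist s 0 < e \<longrightarrow> \<alpha> s \<in> U" by blast
  then show ?thesis by (intro exI[of _ e]) (auto simp: dist_real_def)
qed

lemma E_null:
  assumes E: "condE X x" and x: "x \<in> topspace X" and f: "based_H0_map X x f"
  shows "based_H0_homotopic X x f (\<lambda>_. x)"
proof -
  have fc: "continuous_map H0 X f" and f0: "f 0 = x" using f by (auto simp: based_H0_map_def)
  define xs where "xs k = f (1 / real k)" for k :: nat
  have xsT: "\<forall>k\<ge>1. xs k \<in> topspace X"
    using continuous_map_image_subset_topspace[OF fc] inv_in_H0 unfolding xs_def by auto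
  have lim: "limitin X xs x sequentially"
    using H0_seq[OF fc] f0 by (simp add: xs_def[abs_def])
  obtain \<alpha> where \<alpha>: "pathin X \<alpha>" "\<alpha> 0 = x" "\<And>k. k\<ge>1 \<Longrightarrow> \<alpha> (1 / real k) = xs k"
    using E xsT lim unfolding condE_def by blast
  have inner: "continuous_map (top_of_set ({0..1} \<times> H0_set)) (top_of_set {0..1}) (\<lambda>z. (1 - fst z) * snd z)"
  proof -
    have "continuous_on ({0..1} \<times> H0_set) (\<lambda>z::real\<times>real. (1 - fst z) * snd z)"
      by (intro continuous_intros)
    moreover have "(\<lambda>z::real\<times>real. (1 - fst z) * snd z) \<in> ({0..1} \<times> H0_set) \<rightarrow> {0..1}"
      using H0_set_01 by (auto simp: mult_le_one)
    ultimately show ?thesis by simp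
  qed
  have hc: "continuous_map (prod_topology (top_of_set {0..1}) H0) X (\<lambda>z. \<alpha> ((1 - fst z) * snd z))"
    using continuous_map_compose[OF inner \<alpha>(1)[unfolded pathin_def]]
    by (simp add: H0_def o_def)
  have "homotopic_with (\<lambda>h. h 0 = x) H0 X f (\<lambda>_. x)"
  proof (rule homotopic_with[THEN iffD2], goal_cases)
    case 1 then show ?case by (simp add: H0_set_def)
  next
    case 2 then show ?case
  proof (rule exI[of _ "\<lambda>z. \<alpha> ((1 - fst z) * snd z)"], intro conjI ballI)
    show "continuous_map (prod_topology (top_of_set {0..1}) H0) X (\<lambda>z. \<alpha> ((1 - fst z) * snd z))" by (rule hc)
    fix s assume s: "s \<in> topspace H0"
    show "\<alpha> ((1 - fst (0::real, s)) * snd (0::real, s)) = f s"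
    proof (cases "s = 0")
      case True then show ?thesis using \<alpha> f0 by simp
    next
      case False
      then obtain m where "m \<ge> 1" "s = 1 / real m" using s by (auto simp: H0_set_def)
      then show ?thesis using \<alpha>(3) by (simp add: xs_def)
    qed
    show "\<alpha> ((1 - fst (1::real, s)) * snd (1::real, s)) = x" using \<alpha> by simp
  next
    fix t :: real assume "t \<in> {0..1}"
    show "\<alpha> ((1 - fst (t, 0::real)) * snd (t, 0::real)) = x" using \<alpha> by simp
  qed
  qed
  then show ?thesis by (simp add: based_H0_homotopic_def)
qed



lemma const_based: "x \<in> topspace X \<Longrightarrow> based_H0_map X x (\<lambda>_. x)"
  by (simp add: based_H0_map_def)

lemma E_A:
  assumes E: "condE X x" and x: "x \<in> topspace X"
  shows "seq_0_connected_at X x"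
  unfolding seq_0_connected_at_def
proof (intro allI impI)
  fix f g assume fg: "based_H0_map X x f \<and> based_H0_map X x g"
  have "based_H0_homotopic X x f (\<lambda>_. x)" "based_H0_homotopic X x g (\<lambda>_. x)"
    using E_null[OF E x] fg by auto
  then show "based_H0_homotopic X x f g"
    unfolding based_H0_homotopic_def by (meson homotopic_with_sym homotopic_with_trans)
qed

lemma E_P:
  assumes E: "condE X x" and x: "x \<in> topspace X"
  shows "path_connected_space X"
proof -
  have pc: "path_component_of X x y" if y: "y \<in> topspace X" for y
  proof -
    define xs where "xs k = (if k = 1 then y else x)" for k :: nat
    have "\<forall>k\<ge>1. xs k \<in> topspace X" using x y by (simp add: xs_def)
    moreover have "limitin X xs x sequentially"
    proof (rule limitin_transform_eventually)
      show "limitin X (\<lambda>_. x) x sequentially" using x by simp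
      show "\<forall>\<^sub>F k in sequentially. x = xs k"
        unfolding eventually_sequentially by (rule exI[of _ 2]) (simp add: xs_def)
    qed
    ultimately obtain \<alpha> where "pathin X \<alpha>" "\<alpha> 0 = x" "\<forall>k\<ge>1. \<alpha> (1 / real k) = xs k"
      using E unfolding condE_def by blast
    then have "\<alpha> 1 = y" by (metis of_nat_1 div_by_1 order_refl xs_def)
    then show ?thesis using \<open>pathin X \<alpha>\<close> \<open>\<alpha> 0 = x\<close> unfolding path_component_of_def by blast
  qed
  show ?thesis unfolding path_connected_space_iff_path_component
    using pc path_component_of_sym path_component_of_trans by metis
qed

lemma P_S0:
  assumes P: "path_connected_space X" and x: "x \<in> topspace X"
    and phi: "continuous_map S0 X \<phi>" and p1: "\<phi> (-1) = x"
  shows "based_S0_homotopic X x \<phi> (\<lambda>_. x)"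
proof -
  have "\<phi> 1 \<in> topspace X" using phi by (simp add: continuous_map_def Pi_iff)
  then obtain p where p: "pathin X p" "p 0 = x" "p 1 = \<phi> 1"
    using P x unfolding path_connected_space_def by blast
  have inner: "continuous_map (top_of_set ({0..1} \<times> {-1,1})) (top_of_set {0..1}) (\<lambda>z::real\<times>real. (1 - fst z) * ((snd z + 1) / 2))"
  proof -
    have "continuous_on ({0..1} \<times> {-1,1}) (\<lambda>z::real\<times>real. (1 - fst z) * ((snd z + 1) / 2))"
      by (intro continuous_intros) auto
    moreover have "(\<lambda>z::real\<times>real. (1 - fst z) * ((snd z + 1) / 2)) \<in> ({0..1} \<times> {-1,1}) \<rightarrow> {0..1}"
      by auto
    ultimately show ?thesis by simp
  qed
  have hc: "continuous_map (prod_topology (top_of_set {0..1}) S0) X (\<lambda>z. p ((1 - fst z) * ((snd z + 1) / 2)))"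
    using continuous_map_compose[OF inner p(1)[unfolded pathin_def]]
    by (simp add: S0_def o_def)
  have "homotopic_with (\<lambda>h. h (-1) = x) S0 X \<phi> (\<lambda>_. x)"
  proof (rule homotopic_with[THEN iffD2], goal_cases)
    case 1 then show ?case by simp
  next
    case 2 then show ?case
    proof (rule exI[of _ "\<lambda>z. p ((1 - fst z) * ((snd z + 1) / 2))"], intro conjI ballI)
      show "continuous_map (prod_topology (top_of_set {0..1}) S0) X (\<lambda>z. p ((1 - fst z) * ((snd z + 1) / 2)))" by (rule hc)
      fix s assume s: "s \<in> topspace S0"
      then show "p ((1 - fst (0::real, s)) * ((snd (0::real, s) + 1) / 2)) = \<phi> s"
        using p p1 by auto
      show "p ((1 - fst (1::real, s)) * ((snd (1::real, s) + 1) / 2)) = x" using p by simp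
    next
      fix t :: real assume "t \<in> {0..1}"
      show "p ((1 - fst (t, -1::real)) * ((snd (t, -1::real) + 1) / 2)) = x" using p by simp
    qed
  qed
  then show ?thesis by (simp add: based_S0_homotopic_def)
qed

lemma based_comp_ell:
  assumes "based_H0_map X x f" "m \<ge> 1"
  shows "continuous_map S0 X (f \<circ> ell m) \<and> (f \<circ> ell m) (-1) = x"
  using assms continuous_map_compose[OF ell_cont[OF assms(2)]]
  by (auto simp: based_H0_map_def ell_def)

lemma P_F:
  assumes P: "path_connected_space X" and x: "x \<in> topspace X"
  shows "pi0_finitary_at X x"
  unfolding pi0_finitary_at_def
proof (intro allI impI)
  fix f assume f: "based_H0_map X x f"
  have "\<And>m. m \<ge> 1 \<Longrightarrow> based_S0_homotopic X x (f \<circ> ell m) (\<lambda>_. x)"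
    using P_S0[OF P x] based_comp_ell[OF f] by blast
  then have "{m. m \<ge> 1 \<and> \<not> based_S0_homotopic X x (f \<circ> ell m) (\<lambda>_. x)} = {}"
    by blast
  then show "finite {m. m \<ge> 1 \<and> \<not> based_S0_homotopic X x (f \<circ> ell m) (\<lambda>_. x)}" by (metis finite.emptyI)
qed

lemma PR_A:
  assumes P: "path_connected_space X" and x: "x \<in> topspace X" and R: "pi0_residual_at X x"
  shows "seq_0_connected_at X x"
  unfolding seq_0_connected_at_def
proof (intro allI impI)
  fix f g assume fg: "based_H0_map X x f \<and> based_H0_map X x g"
  have "\<forall>m\<ge>1. based_S0_homotopic X x (f \<circ> ell m) (g \<circ> ell m)"
  proof (intro allI impI)
    fix m :: nat assume m: "m \<ge> 1"
    have "based_S0_homotopic X x (f \<circ> ell m) (\<lambda>_. x)" "based_S0_homotopic X x (g \<circ> ell m) (\<lambda>_. x)"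
      using P_S0[OF P x] based_comp_ell[OF conjunct1[OF fg] m] based_comp_ell[OF conjunct2[OF fg] m] by auto
    then show "based_S0_homotopic X x (f \<circ> ell m) (g \<circ> ell m)"
      unfolding based_S0_homotopic_def by (meson homotopic_with_sym homotopic_with_trans)
  qed
  then show "based_H0_homotopic X x f g" using R fg unfolding pi0_residual_at_def by blast
qed

lemma A_R: "seq_0_connected_at X x \<Longrightarrow> pi0_residual_at X x"
  by (simp add: seq_0_connected_at_def pi0_residual_at_def)



lemma A_E:
  assumes A: "seq_0_connected_at X x" and x: "x \<in> topspace X"
  shows "condE X x"
  unfolding condE_def
proof (intro allI impI)
  fix xs :: "nat \<Rightarrow> _" assume xs: "(\<forall>k\<ge>1. xs k \<in> topspace X) \<and> limitin X xs x sequentially"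
  define f where "f s = (if s = 0 then x else xs (nat \<lfloor>1/s\<rfloor>))" for s :: real
  have fk: "f (1 / real k) = xs k" if "k \<ge> 1" for k
    using that by (simp add: f_def)
  have fT: "f s \<in> topspace X" if sH: "s \<in> H0_set" for s
  proof (cases "s = 0")
    case True then show ?thesis using x by (simp add: f_def)
  next
    case False
    then obtain m where "m \<ge> 1" "s = 1 / real m" using sH by (auto simp: H0_set_def)
    then show ?thesis using fk xs by simp
  qed
  have flim: "limitin X (\<lambda>k. f (1 / real k)) (f 0) sequentially"
  proof (rule limitin_transform_eventually)
    show "limitin X xs (f 0) sequentially" using xs by (simp add: f_def)
    show "\<forall>\<^sub>F k in sequentially. xs k = f (1 / real k)"
      unfolding eventually_sequentially using fk by (intro exI[of _ 1]) simp
  qed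
  have fc: "continuous_map H0 X f" by (rule H0_cont[OF fT flim])
  have "based_H0_homotopic X x f (\<lambda>_. x)"
    using A fc x unfolding seq_0_connected_at_def by (simp add: based_H0_map_def f_def)
  then obtain G :: "real \<times> real \<Rightarrow> _" where G: "continuous_map (prod_topology (top_of_set {0..1}) H0) X G"
    and G0: "\<And>s. G (0, s) = f s" and G1: "\<And>s. G (1, s) = x"
    and Gt: "\<And>t. t \<in> {0..1} \<Longrightarrow> G (t, 0) = x"
    unfolding based_H0_homotopic_def homotopic_with_def by (auto simp del: atLeastAtMost_iff)
  have Gc: "continuous_map (top_of_set ({0..1} \<times> H0_set)) X G"
    using G by (simp add: H0_def)
  define p where "p k t = G (t, 1 / real k)" for k :: nat and t :: real
  have pp: "pathin X (p k)" if k: "k \<ge> 1" for k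
  proof -
    have "continuous_map (top_of_set {0..1}) (top_of_set ({0..1} \<times> H0_set)) (\<lambda>t::real. (t, 1 / real k))"
      using inv_in_H0[OF k] by (auto intro!: continuous_intros)
    from continuous_map_compose[OF this Gc] show ?thesis
      by (simp add: pathin_def p_def[abs_def] o_def)
  qed
  have p0: "p k 0 = xs k" if "k \<ge> 1" for k using G0 fk that by (simp add: p_def)
  have p1: "p k 1 = x" for k using G1 by (simp add: p_def)
  have conv: "\<exists>N. \<forall>k\<ge>N. \<forall>u\<in>{0..1}. p k u \<in> U" if U: "openin X U" "x \<in> U" for U
  proof -
    define W where "W = {z \<in> topspace (prod_topology (top_of_set {0..1}) H0). G z \<in> U}"
    have W: "openin (prod_topology (top_of_set {0..1}) H0) W"
      unfolding W_def by (rule openin_continuous_map_preimage[OF G U(1)])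
    have C: "compactin (top_of_set {0..1}) {0..(1::real)}"
      by (simp add: compactin_subtopology)
    have y: "(0::real) \<in> topspace H0" by (simp add: H0_set_def)
    have sub: "{0..1} \<times> {0} \<subseteq> W"
      using Gt U(2) y by (auto simp: W_def)
    obtain U' V where UV: "openin (top_of_set {0..1}) U'" "openin H0 V" "{0..1} \<subseteq> U'" "0 \<in> V" "U' \<times> V \<subseteq> W"
      using tube_lemma_left[OF W C y sub] by blast
    have "openin (top_of_set H0_set) V" using UV(2) by (simp add: H0_def)
    then obtain e where e: "e > 0" "\<And>s. s \<in> H0_set \<Longrightarrow> dist s 0 < e \<Longrightarrow> s \<in> V"
      using UV(4) unfolding openin_euclidean_subtopology_iff by blast
    obtain N where N: "N \<ge> 1" "\<And>k. k \<ge> N \<Longrightarrow> 1 / real k < e" using small_inv[OF e(1)] by blast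
    show ?thesis
    proof (intro exI[of _ N] allI impI ballI)
      fix k u assume k: "N \<le> k" and u: "u \<in> {0..(1::real)}"
      have "1 / real k \<in> V" using e(2)[OF inv_in_H0] N k by simp
      then have "(u, 1 / real k) \<in> W" using UV(3,5) u by blast
      then show "p k u \<in> U" by (simp add: W_def p_def)
    qed
  qed
  show "\<exists>\<alpha>. pathin X \<alpha> \<and> \<alpha> 0 = x \<and> (\<forall>k\<ge>1. \<alpha> (1 / real k) = xs k)"
    by (rule core[where p=p, OF pp p0 p1 x conv])
qed



definition condN :: "'a topology \<Rightarrow> 'a \<Rightarrow> bool" where
  "condN X x \<longleftrightarrow> (\<forall>f :: nat \<Rightarrow> real \<Rightarrow> 'a. (\<forall>k. continuous_map S0 X (f k)) \<and> maps_converge_to S0 X f x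
            \<longrightarrow> seq_null_homotopic S0 X f x)"

lemma prodS0: "prod_topology (top_of_set {0..1}) S0 = top_of_set ({0..1} \<times> {-1,1})"
  by (simp add: S0_def)

lemma N_E:
  assumes N: "condN X x" and x: "x \<in> topspace X"
  shows "condE X x"
  unfolding condE_def
proof (intro allI impI)
  fix xs :: "nat \<Rightarrow> _" assume xs: "(\<forall>k\<ge>1. xs k \<in> topspace X) \<and> limitin X xs x sequentially"
  define f where "f k s = (if s = -1 \<or> k = 0 then x else xs k)" for k :: nat and s :: real
  have fc: "continuous_map S0 X (f k)" for k
    by (rule S0_cont) (use x xs in \<open>auto simp: f_def\<close>)
  have fconv: "maps_converge_to S0 X f x"
    unfolding maps_converge_to_def
  proof (intro allI impI)
    fix U assume U: "openin X U \<and> x \<in> U"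
    then obtain M where M: "\<And>k. k \<ge> M \<Longrightarrow> xs k \<in> U"
      using xs unfolding limitin_def eventually_sequentially by blast
    show "\<forall>\<^sub>F k in sequentially. f k ` topspace S0 \<subseteq> U"
      unfolding eventually_sequentially
      by (rule exI[of _ M]) (use U M in \<open>auto simp: f_def\<close>)
  qed
  obtain H :: "nat \<Rightarrow> real \<times> real \<Rightarrow> _" where
    Hc: "\<And>k. continuous_map (prod_topology (top_of_set {0..1}) S0) X (H k)"
    and H0: "\<And>k t. t \<in> topspace S0 \<Longrightarrow> H k (0, t) = f k t"
    and H1: "\<And>k t. t \<in> topspace S0 \<Longrightarrow> H k (1, t) = x"
    and Hconv: "maps_converge_to (prod_topology (top_of_set {0..1}) S0) X H x"
    using N fc fconv unfolding condN_def seq_null_homotopic_def by blast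
  define p where "p k t = H k (t, 1)" for k :: nat and t :: real
  have pp: "pathin X (p k)" if k: "k \<ge> 1" for k
  proof -
    have "continuous_map (top_of_set {0..1}) (top_of_set ({0..1} \<times> {-1,1})) (\<lambda>t::real. (t, 1::real))"
      by (auto intro!: continuous_intros)
    from continuous_map_compose[OF this Hc[of k, unfolded prodS0]] show ?thesis
      by (simp add: pathin_def p_def[abs_def] o_def)
  qed
  have p0: "p k 0 = xs k" if "k \<ge> 1" for k using H0[of 1 k] that by (simp add: p_def f_def)
  have p1: "p k 1 = x" for k using H1[of 1 k] by (simp add: p_def)
  have conv: "\<exists>N. \<forall>k\<ge>N. \<forall>u\<in>{0..1}. p k u \<in> U" if U: "openin X U" "x \<in> U" for U
  proof -
    obtain M where M: "\<And>k. k \<ge> M \<Longrightarrow> H k ` topspace (prod_topology (top_of_set {0..1}) S0) \<subseteq> U"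
      using Hconv U unfolding maps_converge_to_def eventually_sequentially by blast
    show ?thesis
      by (rule exI[of _ M]) (use M in \<open>force simp: p_def\<close>)
  qed
  show "\<exists>\<alpha>. pathin X \<alpha> \<and> \<alpha> 0 = x \<and> (\<forall>k\<ge>1. \<alpha> (1 / real k) = xs k)"
    by (rule core[where p=p, OF pp p0 p1 x conv])
qed



lemma E_N:
  assumes E: "condE X x" and x: "x \<in> topspace X"
  shows "condN X x"
  unfolding condN_def
proof (intro allI impI)
  fix f :: "nat \<Rightarrow> real \<Rightarrow> _"
  assume fa: "(\<forall>k. continuous_map S0 X (f k)) \<and> maps_converge_to S0 X f x"
  have fT: "\<And>k s. s \<in> {-1,1} \<Longrightarrow> f k s \<in> topspace X"
    using fa continuous_map_image_subset_topspace by fastforce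
  define xs where "xs j = f ((j - 1) div 2) (if odd j then -1 else 1)" for j :: nat
  have xsT: "\<forall>j\<ge>1. xs j \<in> topspace X" using fT by (simp add: xs_def)
  have lim: "limitin X xs x sequentially"
    unfolding limitin_def
  proof (intro conjI allI impI)
    show "x \<in> topspace X" by (rule x)
    fix U assume U: "openin X U \<and> x \<in> U"
    then obtain K where K: "\<And>k. k \<ge> K \<Longrightarrow> f k ` {-1,1} \<subseteq> U"
      using fa unfolding maps_converge_to_def eventually_sequentially topspace_S0 by blast
    show "\<forall>\<^sub>F j in sequentially. xs j \<in> U"
      unfolding eventually_sequentially
    proof (intro exI[of _ "2 * K + 1"] allI impI)
      fix j assume "2 * K + 1 \<le> j"
      then have "(j - 1) div 2 \<ge> K" by linarith
      then show "xs j \<in> U" using K by (auto simp: xs_def)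
    qed
  qed
  obtain \<alpha> where \<alpha>: "pathin X \<alpha>" "\<alpha> 0 = x" "\<And>k. k\<ge>1 \<Longrightarrow> \<alpha> (1 / real k) = xs k"
    using E xsT lim unfolding condE_def by blast
  define c where "c k s = (1 - s) / (2 * real (2*k+1)) + (1 + s) / (2 * real (2*k+2))" for k :: nat and s :: real
  have cm: "c k (-1) = 1 / real (2*k+1)" for k by (simp add: c_def field_simps)
  have cp: "c k 1 = 1 / real (2*k+2)" for k by (simp add: c_def field_simps)
  have cle: "c k s \<le> 1 / real (2*k+1)" "0 \<le> c k s" if "s \<in> {-1,1}" for k s
  proof -
    have "1 / real (2*k+2) \<le> 1 / real (2*k+1)" by (intro frac_le) auto
    then show "c k s \<le> 1 / real (2*k+1)" "0 \<le> c k s" using that cm cp by auto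
  qed
  define H where "H k z = \<alpha> ((1 - fst z) * c k (snd z))" for k :: nat and z :: "real \<times> real"
  have Hc: "continuous_map (prod_topology (top_of_set {0..1}) S0) X (H k)" for k
  proof -
    have "continuous_on ({0..1} \<times> {-1,1}) (\<lambda>z::real\<times>real. (1 - fst z) * c k (snd z))"
      unfolding c_def by (intro continuous_intros) auto
    moreover have "(\<lambda>z::real\<times>real. (1 - fst z) * c k (snd z)) \<in> ({0..1} \<times> {-1,1}) \<rightarrow> {0..1}"
    proof
      fix z :: "real \<times> real" assume z: "z \<in> {0..1} \<times> {-1,1}"
      then have "snd z \<in> {-1,1}" by auto
      then have "c k (snd z) \<le> 1" "0 \<le> c k (snd z)" using cle[of "snd z" k]
        by (auto intro: order_trans[of _ "1 / real (2*k+1)"])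
      then show "(1 - fst z) * c k (snd z) \<in> {0..1}" using z by (auto simp: mult_le_one)
    qed
    ultimately have "continuous_map (top_of_set ({0..1} \<times> {-1,1})) (top_of_set {0..1}) (\<lambda>z::real\<times>real. (1 - fst z) * c k (snd z))"
      by simp
    from continuous_map_compose[OF this \<alpha>(1)[unfolded pathin_def]] show ?thesis
      by (simp add: prodS0 H_def[abs_def] o_def)
  qed
  have H0: "H k (0, t) = f k t" if "t \<in> topspace S0" for k t
  proof -
    have a: "\<alpha> (1 / real (2*k+1)) = f k (-1)" using \<alpha>(3)[of "2*k+1"] by (simp add: xs_def)
    have b: "\<alpha> (1 / real (2*k+2)) = f k 1" using \<alpha>(3)[of "2*k+2"] by (simp add: xs_def)
    show ?thesis using that a b cm cp by (auto simp: H_def)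
  qed
  have H1: "H k (1, t) = x" for k t using \<alpha>(2) by (simp add: H_def)
  have Hconv: "maps_converge_to (prod_topology (top_of_set {0..1}) S0) X H x"
    unfolding maps_converge_to_def
  proof (intro allI impI)
    fix U assume U: "openin X U \<and> x \<in> U"
    then obtain e where e: "e > 0" "\<And>t. t \<in> {0..1} \<Longrightarrow> t < e \<Longrightarrow> \<alpha> t \<in> U"
      using path_small[OF \<alpha>(1)] \<alpha>(2) by metis
    obtain N where N: "\<And>k. k \<ge> N \<Longrightarrow> 1 / real k < e" using small_inv[OF e(1)] by blast
    show "\<forall>\<^sub>F k in sequentially. H k ` topspace (prod_topology (top_of_set {0..1}) S0) \<subseteq> U"
      unfolding eventually_sequentially
    proof (intro exI[of _ N] allI impI subsetI)
      fix k y assume k: "N \<le> k" and y: "y \<in> H k ` topspace (prod_topology (top_of_set {0..1}) S0)"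
      then obtain t s where ts: "t \<in> {0..1}" "s \<in> {-1,1}" "y = H k (t, s)" by (auto simp del: atLeastAtMost_iff)
      have "(1 - t) * c k s \<le> c k s" using ts cle[OF ts(2)] by (simp add: mult_left_le_one_le)
      also have "\<dots> \<le> 1 / real (2*k+1)" using cle[OF ts(2)] by simp
      also have "\<dots> < e" using N[of "2*k+1"] k by simp
      finally have lt: "(1 - t) * c k s < e" .
      have "c k s \<le> 1" using cle[OF ts(2)] by (auto intro: order_trans[of _ "1 / real (2*k+1)"])
      then have "(1 - t) * c k s \<in> {0..1}" using ts cle[OF ts(2)] by (auto simp: mult_le_one)
      then show "y \<in> U" using e(2) lt ts by (simp add: H_def)
    qed
  qed
  show "seq_null_homotopic S0 X f x"
    unfolding seq_null_homotopic_def using Hc H0 H1 Hconv by blast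
qed


theorem lemma2p21:
  fixes X :: "'a topology" and x :: 'a
  assumes "Hausdorff_space X" and "x \<in> topspace X"
  shows "(seq_0_connected_at X x \<longleftrightarrow> path_connected_space X \<and> tame0_at X x)
    \<and> (path_connected_space X \<and> tame0_at X x \<longleftrightarrow> path_connected_space X \<and> pi0_residual_at X x)
    \<and> (path_connected_space X \<and> pi0_residual_at X x \<longleftrightarrow>
         (\<forall>f :: nat \<Rightarrow> real \<Rightarrow> 'a. (\<forall>k. continuous_map S0 X (f k)) \<and> maps_converge_to S0 X f x
            \<longrightarrow> seq_null_homotopic S0 X f x))
    \<and> ((\<forall>f :: nat \<Rightarrow> real \<Rightarrow> 'a. (\<forall>k. continuous_map S0 X (f k)) \<and> maps_converge_to S0 X f x
            \<longrightarrow> seq_null_homotopic S0 X f x) \<longleftrightarrow>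
       (\<forall>xs :: nat \<Rightarrow> 'a. (\<forall>k\<ge>1. xs k \<in> topspace X) \<and> limitin X xs x sequentially
            \<longrightarrow> (\<exists>\<alpha>. pathin X \<alpha> \<and> \<alpha> 0 = x \<and> (\<forall>k\<ge>1. \<alpha> (1 / real k) = xs k))))"
proof -
  have x: "x \<in> topspace X" by (rule assms(2))
  have AE: "seq_0_connected_at X x \<longleftrightarrow> condE X x" using A_E[OF _ x] E_A[OF _ x] by blast
  have EN: "condE X x \<longleftrightarrow> condN X x" using E_N[OF _ x] N_E[OF _ x] by blast
  have EP: "condE X x \<Longrightarrow> path_connected_space X" using E_P[OF _ x] by blast
  have AR: "seq_0_connected_at X x \<Longrightarrow> pi0_residual_at X x" by (rule A_R)
  have PF: "path_connected_space X \<Longrightarrow> pi0_finitary_at X x" using P_F[OF _ x] by blast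
  have PRA: "path_connected_space X \<Longrightarrow> pi0_residual_at X x \<Longrightarrow> seq_0_connected_at X x"
    using PR_A[OF _ x] by blast
  show ?thesis
    unfolding tame0_at_def condN_def[symmetric] condE_def[symmetric]
    using AE EN EP AR PF PRA by blast
qed

end
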